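(* For $m,n\ge1$, \[ G^{(1)}_{m,n}=\frac{(-1)^n}{n!}\int_0^1\binom{t}{m}\left[{n\atop 1}\right]_{t-1}dt . \]
   Context: Define $G^{(1)}_{m,n}$ ($m,n\ge0$) by the formal power series $\sum_{m,n\ge0}G^{(1)}_{m,n}x^my^n=\dfrac{y\log(1+x)-x\log(1+y)}{\log(1+x)-\log(1+y)}$. $\binom{t}{m}=t(t-1)\cdots(t-m+1)/m!$. The Stirling polynomials of the first kind $\left[{n\atop m}\right]_x\in\mathbb Z[x]$ ($n\ge m\ge0$) are defined by $\sum_{m=0}^n\left[{n\atop m}\right]_x y^m=(x+y)(x+y+1)\cdots(x+y+n-1)$. *)

theory Defs
  imports "HOL-Analysis.Analysis" "HOL-Computational_Algebra.Computational_Algebra"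
begin

text \<open>Bivariate formal power series over the reals are modelled as 'real fps fps':
  the outer variable is y, the inner variable is x; the coefficient of x^m y^n of F
  is 'F $ n $ m'.\<close>

definition bvX :: "real fps fps" where "bvX = fps_const fps_X"
definition bvY :: "real fps fps" where "bvY = fps_X"

text \<open>log(1+x) and log(1+y) as bivariate series.\<close>
definition logX :: "real fps fps" where "logX = fps_const (fps_ln 1)"
definition logY :: "real fps fps" where "logY = Abs_fps (\<lambda>n. fps_const (fps_ln 1 $ n))"

text \<open>The quotient (y log(1+x) - x log(1+y)) / (log(1+x) - log(1+y)) in the
  (integral-domain) ring of bivariate formal power series: the unique F with
  F * (log(1+x) - log(1+y)) = y log(1+x) - x log(1+y).\<close>
definition G1_series :: "real fps fps" where
  "G1_series = (THE F. F * (logX - logY) = bvY * logX - bvX * logY)"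

definition G1 :: "nat \<Rightarrow> nat \<Rightarrow> real" where
  "G1 m n = G1_series $ n $ m"

text \<open>Stirling polynomials of the first kind:
  sum_m [n,m]_x y^m = (x+y)(x+y+1)...(x+y+n-1).\<close>
definition stirling1_poly :: "nat \<Rightarrow> nat \<Rightarrow> real \<Rightarrow> real" where
  "stirling1_poly n m x = coeff (\<Prod>i<n. [: x + of_nat i, 1 :]) m"

end

theory Submission
  imports Defs
begin

definition ll :: "nat \<Rightarrow> real" where "ll k = (if k = 0 then 0 else (-1)^(k-1) / real k)"
definition bp :: "nat \<Rightarrow> real poly" where
  "bp n = smult (1 / fact n) (\<Prod>i<n. [:- of_nat i, 1:])"

lemma poly_bp: "poly (bp n) t = t gchoose n"
  by (simp add: bp_def gbinomial_prod_rev poly_prod atLeast0LessThan)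

lemma bp_0[simp]: "bp 0 = 1" by (simp add: bp_def)

lemma bp_shift: "pcompose (bp (Suc m)) [:1,1:] = bp (Suc m) + bp m"
proof -
  have "poly (pcompose (bp (Suc m)) [:1,1:]) = poly (bp (Suc m) + bp m)"
  proof
    fix t :: real
    show "poly (pcompose (bp (Suc m)) [:1,1:]) t = poly (bp (Suc m) + bp m) t"
      using gbinomial_Suc_Suc[of t m] by (simp add: poly_pcompose poly_bp add.commute)
  qed
  then show ?thesis by (simp add: poly_eq_poly_eq_iff)
qed

lemma deriv_bp_0: "poly (pderiv (bp k)) 0 = ll k"
proof (cases k)
  case 0 then show ?thesis by (simp add: ll_def)
next
  case (Suc j)
  define Q where "Q = (\<Prod>i<j. [:- of_nat (Suc i), 1::real:])"
  have hb: "bp k = smult (1 / fact k) ([:0,1:] * Q)"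
    unfolding bp_def Q_def Suc by (subst prod.lessThan_Suc_shift) simp
  have hQ: "poly Q 0 = (-1)^j * fact j"
  proof -
    have "poly Q 0 = (\<Prod>i<j. - (of_nat (Suc i)::real))" by (simp add: Q_def poly_prod)
    also have "\<dots> = (-1)^j * (\<Prod>i<j. (of_nat (Suc i)::real))" by (subst prod_uminus) simp
    also have "(\<Prod>i<j. (of_nat (Suc i)::real)) = fact j"
      by (induction j) (simp_all add: algebra_simps)
    finally show ?thesis .
  qed
  have "poly (pderiv (bp k)) 0 = (1 / fact k) * poly Q 0"
    unfolding hb by (simp add: pderiv_smult pderiv_mult pderiv_pCons)
  also have "\<dots> = (-1)^j / real (Suc j)"
  proof -
    have "fact j \<noteq> (0::real)" by simp
    then show ?thesis unfolding hQ Suc fact_Suc of_nat_mult by (simp add: divide_simps)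
  qed
  finally show ?thesis by (simp add: ll_def Suc)
qed

lemma nat_roots_zero:
  fixes p :: "real poly"
  assumes "\<And>n::nat. poly p (of_nat n) = 0"
  shows "p = 0"
proof (rule ccontr)
  assume "p \<noteq> 0"
  hence "finite {x. poly p x = 0}" by (rule poly_roots_finite)
  moreover have "range (of_nat :: nat \<Rightarrow> real) \<subseteq> {x. poly p x = 0}" using assms by auto
  moreover have "infinite (range (of_nat :: nat \<Rightarrow> real))"
    using range_inj_infinite[of "of_nat :: nat \<Rightarrow> real"] inj_of_nat by blast
  ultimately show False using finite_subset by blast
qed

lemma sum_gchoose0: "(\<Sum>j\<le>m. f j * ((0::real) gchoose j)) = f 0"
  by (induction m) simp_all

definition E :: "nat \<Rightarrow> real poly" where
  "E m = pderiv (bp m) - (\<Sum>j\<le>m. smult (ll (m - j)) (bp j))"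

lemma pcompose_pderiv_shift: "pcompose (pderiv p) [:1,1:] = pderiv (pcompose p [:(1::real),1:])"
  by (simp add: pderiv_pcompose pderiv_pCons)

lemma E_shift: "pcompose (E (Suc m)) [:1,1:] = E (Suc m) + E m"
proof -
  have d: "pcompose (pderiv (bp (Suc m))) [:1,1:] = pderiv (bp (Suc m)) + pderiv (bp m)"
    by (simp add: pcompose_pderiv_shift bp_shift pderiv_add)
  have s1: "(\<Sum>j\<le>Suc m. smult (ll (Suc m - j)) (bp j)) =
      smult (ll (Suc m)) 1 + (\<Sum>i\<le>m. smult (ll (m - i)) (bp (Suc i)))"
    by (subst sum.atMost_Suc_shift) simp
  have s2: "pcompose (\<Sum>j\<le>Suc m. smult (ll (Suc m - j)) (bp j)) [:1,1:] =
      smult (ll (Suc m)) 1 + (\<Sum>i\<le>m. smult (ll (m - i)) (bp (Suc i)))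
        + (\<Sum>i\<le>m. smult (ll (m - i)) (bp i))"
  proof -
    have "pcompose (\<Sum>j\<le>Suc m. smult (ll (Suc m - j)) (bp j)) [:1,1:] =
       (\<Sum>j\<le>Suc m. smult (ll (Suc m - j)) (pcompose (bp j) [:1,1:]))"
      by (simp only: pcompose_sum pcompose_smult)
    also have "\<dots> = smult (ll (Suc m)) 1 + (\<Sum>i\<le>m. smult (ll (m - i)) (pcompose (bp (Suc i)) [:1,1:]))"
      by (subst sum.atMost_Suc_shift) (simp add: pcompose_1)
    also have "\<dots> = smult (ll (Suc m)) 1 + (\<Sum>i\<le>m. smult (ll (m - i)) (bp (Suc i)))
        + (\<Sum>i\<le>m. smult (ll (m - i)) (bp i))"
      by (simp only: bp_shift smult_add_right sum.distrib add.assoc)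
    finally show ?thesis .
  qed
  show ?thesis
    unfolding E_def pcompose_diff d s2 unfolding s1 by (simp add: algebra_simps)
qed

lemma E_zero: "E m = 0"
proof (induction m)
  case 0 then show ?case by (simp add: E_def ll_def)
next
  case (Suc m)
  have sh: "poly (E (Suc m)) (t + 1) = poly (E (Suc m)) t" for t
    using arg_cong[OF E_shift[of m], of "\<lambda>p. poly p t"] Suc
    by (simp add: poly_pcompose add.commute)
  have z: "poly (E (Suc m)) 0 = 0"
    by (simp add: E_def deriv_bp_0 poly_sum poly_bp sum_gchoose0 del: sum.atMost_Suc)
  have "poly (E (Suc m)) (of_nat n) = 0" for n
  proof (induction n)
    case (Suc n) then show ?case using sh[of "real n"] by (simp add: add.commute)
  qed (use z in simp)
  then show ?case by (rule nat_roots_zero)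
qed

lemma bp_deriv: "pderiv (bp m) = (\<Sum>j\<le>m. smult (ll (m - j)) (bp j))"
  using E_zero[of m] by (simp add: E_def)

definition cp :: "nat \<Rightarrow> real poly" where "cp n = pcompose (bp n) [:1,-1:]"

lemma pderiv_cp: "pderiv (cp n) = - pcompose (pderiv (bp n)) [:1,-1:]"
  by (simp add: cp_def pderiv_pcompose pderiv_pCons)

lemma cp_sum0: "(\<Sum>i\<le>n. smult (ll (n - i)) (cp i)) = pcompose (pderiv (bp n)) [:1,-1:]"
  unfolding bp_deriv cp_def by (simp add: pcompose_sum pcompose_smult)

lemma cp_sum: "(\<Sum>i\<le>n. smult (ll (n - i)) (cp i)) = - pderiv (cp n)"
  using cp_sum0 pderiv_cp by simp

lemma poly_dcp: "poly (pderiv (cp n)) x = - (\<Sum>j\<le>n. ll (n - j) * ((1 - x) gchoose j))"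
  unfolding pderiv_cp bp_deriv by (simp add: poly_pcompose poly_sum poly_bp)

lemma gchoose1_SS: "(1::real) gchoose (Suc (Suc k)) = 0"
  using binomial_gbinomial[of 1 "Suc (Suc k)", where ?'a = real] by simp

lemma sum_gchoose1: "(\<Sum>j\<le>n. f j * ((1::real) gchoose j)) = f 0 + (if n \<ge> 1 then f 1 else 0)"
proof (induction n)
  case (Suc n) then show ?case by (cases n) (simp_all add: gchoose1_SS)
qed simp

lemma dcp_1: "poly (pderiv (cp n)) 1 = - ll n"
  unfolding poly_dcp using sum_gchoose0[where f="\<lambda>j. ll (n - j)" and m=n] by simp

lemma dcp_0: "poly (pderiv (cp n)) 0 = - (ll n + ll (n - 1))"
  unfolding poly_dcp using sum_gchoose1[where f="\<lambda>j. ll (n - j)" and n=n] by (simp add: ll_def)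

definition Intg :: "real poly \<Rightarrow> real" where "Intg p = integral {0..1} (poly p)"

lemma poly_integrable: "poly p integrable_on {0..1::real}"
  by (intro integrable_continuous_interval continuous_at_imp_continuous_on ballI
      DERIV_isCont[OF poly_DERIV])

lemma Intg_pderiv: "Intg (pderiv q) = poly q 1 - poly q 0"
  unfolding Intg_def
proof (rule integral_unique, rule fundamental_theorem_of_calculus)
  fix x :: real
  show "(poly q has_vector_derivative poly (pderiv q) x) (at x within {0..1})"
    using has_real_derivative_iff_has_vector_derivative poly_DERIV[of q x]
    by (metis DERIV_subset top_greatest)
qed simp

lemma Intg_add: "Intg (p + q) = Intg p + Intg q"
proof -
  have "poly (p + q) = (\<lambda>x. poly p x + poly q x)" by (simp add: fun_eq_iff)
  then show ?thesis unfolding Intg_def by (simp add: integral_add poly_integrable)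
qed

lemma Intg_diff: "Intg (p - q) = Intg p - Intg q"
proof -
  have "poly (p - q) = (\<lambda>x. poly p x - poly q x)" by (simp add: fun_eq_iff)
  then show ?thesis unfolding Intg_def by (simp add: integral_diff poly_integrable)
qed

lemma Intg_smult: "Intg (smult c p) = c * Intg p"
proof -
  have "poly (smult c p) = (\<lambda>x. c *\<^sub>R poly p x)" by (simp add: fun_eq_iff)
  then show ?thesis unfolding Intg_def by simp
qed

lemma Intg_sum: "finite A \<Longrightarrow> Intg (\<Sum>i\<in>A. f i) = (\<Sum>i\<in>A. Intg (f i))"
proof -
  have "poly (\<Sum>i\<in>A. f i) = (\<lambda>x. \<Sum>i\<in>A. poly (f i) x)" by (simp add: fun_eq_iff poly_sum)
  moreover assume "finite A"
  ultimately show ?thesis unfolding Intg_def by (simp add: integral_sum poly_integrable)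
qed

lemma pderiv_sum': "pderiv (sum f A) = (\<Sum>x\<in>A. pderiv (f x))"
  by (induction A rule: infinite_finite_induct) (simp_all add: pderiv_add)

definition H :: "nat \<Rightarrow> nat \<Rightarrow> real" where "H m n = Intg (bp m * pderiv (cp n))"

lemma key: "(\<Sum>j\<le>m. ll (m - j) * H j n) - (\<Sum>i\<le>n. ll (n - i) * H m i) =
   poly (bp m) 1 * poly (pderiv (cp n)) 1 - poly (bp m) 0 * poly (pderiv (cp n)) 0"
proof -
  have 1: "(\<Sum>j\<le>m. ll (m - j) * H j n) = Intg (pderiv (bp m) * pderiv (cp n))"
    unfolding bp_deriv H_def
    by (simp add: Intg_sum sum_distrib_right Intg_smult)
  have "(\<Sum>i\<le>n. smult (ll (n - i)) (pderiv (cp i))) = - pderiv (pderiv (cp n))"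
    using arg_cong[OF cp_sum[of n], of pderiv] by (simp add: pderiv_sum' pderiv_smult pderiv_minus)
  hence 2: "(\<Sum>i\<le>n. ll (n - i) * H m i) = Intg (- (bp m * pderiv (pderiv (cp n))))"
  proof -
    have "(\<Sum>i\<le>n. ll (n - i) * H m i) = (\<Sum>i\<le>n. Intg (smult (ll (n - i)) (bp m * pderiv (cp i))))"
      unfolding H_def Intg_smult ..
    also have "\<dots> = Intg (\<Sum>i\<le>n. smult (ll (n - i)) (bp m * pderiv (cp i)))"
      by (simp add: Intg_sum)
    also have "(\<Sum>i\<le>n. smult (ll (n - i)) (bp m * pderiv (cp i))) =
        bp m * (\<Sum>i\<le>n. smult (ll (n - i)) (pderiv (cp i)))"
      by (simp add: sum_distrib_left mult_smult_right)
    finally show ?thesis using \<open>(\<Sum>i\<le>n. smult (ll (n - i)) (pderiv (cp i))) = - pderiv (pderiv (cp n))\<close>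
      by simp
  qed
  have "(\<Sum>j\<le>m. ll (m - j) * H j n) - (\<Sum>i\<le>n. ll (n - i) * H m i) =
      Intg (pderiv (bp m * pderiv (cp n)))"
    unfolding 1 2 Intg_diff[symmetric] by (simp add: pderiv_mult algebra_simps)
  then show ?thesis by (simp add: Intg_pderiv)
qed

definition ff :: "nat \<Rightarrow> nat \<Rightarrow> real" where
  "ff m n = H m n + (if m = 0 \<and> n = 1 then 1 else 0)"

definition Fs :: "real fps fps" where "Fs = Abs_fps (\<lambda>n. Abs_fps (\<lambda>m. ff m n))"

lemma lnX: "fps_ln 1 $ k = ll k"
  by (simp add: fps_ln_nth ll_def)

lemma logY_nth: "logY $ k = fps_const (ll k)"
  by (simp add: logY_def lnX)

lemma coeff_lhs: "((Fs * (logX - logY)) $ n) $ m =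
   (\<Sum>j\<le>m. ff j n * ll (m - j)) - (\<Sum>i\<le>n. ff m i * ll (n - i))"
proof -
  have a: "((Fs * logX) $ n) $ m = (\<Sum>j\<le>m. ff j n * ll (m - j))"
  proof -
    have "(Fs * logX) $ n = Fs $ n * fps_ln 1" by (simp add: logX_def)
    then show ?thesis by (simp add: fps_mult_nth Fs_def lnX atLeast0AtMost)
  qed
  have b: "((Fs * logY) $ n) $ m = (\<Sum>i\<le>n. ff m i * ll (n - i))"
  proof -
    have "(Fs * logY) $ n = (\<Sum>i=0..n. Fs $ i * fps_const (ll (n - i)))"
      by (simp add: fps_mult_nth logY_nth)
    then show ?thesis by (simp add: fps_sum_nth Fs_def atLeast0AtMost)
  qed
  show ?thesis using a b by (simp add: right_diff_distrib)
qed

lemma coeff_rhs: "((bvY * logX - bvX * logY) $ n) $ m =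
   (if n = 1 then ll m else 0) - (if m = 1 then ll n else 0)"
proof -
  have 1: "(bvY * logX) $ n = (if n = 0 then 0 else logX $ (n - 1))"
    by (simp add: bvY_def)
  have 2: "(bvX * logY) $ n = fps_X * fps_const (ll n)"
    by (simp add: bvX_def logY_nth)
  have 3: "((bvY * logX) $ n) $ m = (if n = 1 then ll m else 0)"
    unfolding 1 by (simp add: logX_def lnX)
  have 4: "((bvX * logY) $ n) $ m = (if m = 1 then ll n else 0)"
    unfolding 2 by simp
  show ?thesis using 3 4 by simp
qed

lemma sum_ind1: "(\<Sum>j\<le>m. (if j = 0 \<and> n = 1 then 1 else 0) * ll (m - j)) = (if n = 1 then ll m else 0)"
proof -
  have "(\<lambda>j. (if j = 0 \<and> n = 1 then 1 else 0) * ll (m - j)) =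
      (\<lambda>j. if j = 0 then (if n = 1 then ll (m - j) else 0) else 0)" (is "_ = ?g") by (auto simp: fun_eq_iff)
  have "sum ?g {..m} = (if n = 1 then ll m else 0)" by (subst sum.delta) auto
  then show ?thesis using \<open>_ = ?g\<close> by (simp only:)
qed

lemma sum_ind2: "(\<Sum>i\<le>n. (if m = 0 \<and> i = 1 then 1 else 0) * ll (n - i)) = (if m = 0 \<and> n \<ge> 1 then ll (n - 1) else 0)"
proof -
  have "(\<lambda>i. (if m = 0 \<and> i = 1 then 1 else 0) * ll (n - i)) =
      (\<lambda>i. if i = 1 then (if m = 0 then ll (n - i) else 0) else 0)" (is "_ = ?g") by (auto simp: fun_eq_iff)
  have "sum ?g {..n} = (if m = 0 \<and> n \<ge> 1 then ll (n - 1) else 0)" by (subst sum.delta) auto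
  then show ?thesis using \<open>_ = ?g\<close> by (simp only:)
qed

lemma coeff_eq: "((Fs * (logX - logY)) $ n) $ m = ((bvY * logX - bvX * logY) $ n) $ m"
proof -
  have e1: "(\<Sum>j\<le>m. ff j n * ll (m - j)) = (\<Sum>j\<le>m. ll (m - j) * H j n) + (if n = 1 then ll m else 0)"
    unfolding ff_def distrib_right sum.distrib sum_ind1 by (simp add: mult.commute)
  have e2: "(\<Sum>i\<le>n. ff m i * ll (n - i)) = (\<Sum>i\<le>n. ll (n - i) * H m i) + (if m = 0 \<and> n \<ge> 1 then ll (n - 1) else 0)"
    unfolding ff_def distrib_right sum.distrib sum_ind2 by (simp add: mult.commute)
  have k: "(\<Sum>j\<le>m. ll (m - j) * H j n) - (\<Sum>i\<le>n. ll (n - i) * H m i) =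
     (1 gchoose m) * (- ll n) - (0 gchoose m) * (- (ll n + ll (n - 1)))"
    using key[of m n] by (simp add: poly_bp dcp_1 dcp_0)
  have "((Fs * (logX - logY)) $ n) $ m = (1 gchoose m) * (- ll n) - (0 gchoose m) * (- (ll n + ll (n - 1)))
     + (if n = 1 then ll m else 0) - (if m = 0 \<and> n \<ge> 1 then ll (n - 1) else 0)"
    unfolding coeff_lhs e1 e2 using k by simp
  also have "\<dots> = (if n = 1 then ll m else 0) - (if m = 1 then ll n else 0)"
  proof (cases m)
    case 0 then show ?thesis by (cases n) (simp_all add: ll_def)
  next
    case (Suc k) then show ?thesis by (cases k) (simp_all add: gchoose1_SS)
  qed
  also have "\<dots> = ((bvY * logX - bvX * logY) $ n) $ m" by (rule coeff_rhs[symmetric])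
  finally show ?thesis .
qed

lemma Fs_eq: "Fs * (logX - logY) = bvY * logX - bvX * logY"
  by (rule fps_ext, rule fps_ext, rule coeff_eq)

lemma L_nz: "logX - logY \<noteq> 0"
proof
  assume "logX - logY = 0"
  hence "((logX - logY) $ 0) $ 1 = 0" by simp
  moreover have "((logX - logY) $ 0) $ 1 = 1" by (simp add: logX_def logY_nth lnX ll_def)
  ultimately show False by simp
qed

lemma G1_series_eq: "G1_series = Fs"
  unfolding G1_series_def
proof (rule the_equality)
  show "Fs * (logX - logY) = bvY * logX - bvX * logY" by (rule Fs_eq)
next
  fix F assume "F * (logX - logY) = bvY * logX - bvX * logY"
  hence "F * (logX - logY) = Fs * (logX - logY)" using Fs_eq by simp
  then show "F = Fs" using L_nz by simp
qed

definition RP :: "nat \<Rightarrow> real poly" where "RP n = (\<Prod>i<n. [:of_nat i, 1:])"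

lemma stir: "stirling1_poly n 1 x = poly (pderiv (RP n)) x"
proof -
  have "(\<Prod>i<n. [:x + of_nat i, 1:]) = pcompose (RP n) [:x,1:]"
    unfolding RP_def pcompose_prod by (simp add: pcompose_pCons add.commute)
  moreover have "coeff p 1 = poly (pderiv p) 0" for p :: "real poly"
    using coeff_pderiv[of p 0] by (simp add: poly_0_coeff_0)
  ultimately show ?thesis
    unfolding stirling1_poly_def by (simp add: pderiv_pcompose poly_pcompose pderiv_pCons)
qed

lemma cp_RP: "cp n = smult ((-1)^n / fact n) (pcompose (RP n) [:-1,1:])"
proof -
  have "poly (cp n) t = poly (smult ((-1)^n / fact n) (pcompose (RP n) [:-1,1:])) t" for t
  proof -
    have "(\<Prod>i=0..<n. (1 - t) - of_nat i) = (\<Prod>i<n. - (-1 + t + of_nat i))"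
      by (simp add: atLeast0LessThan algebra_simps)
    also have "\<dots> = (-1)^n * (\<Prod>i<n. (-1 + t + of_nat i))"
      by (subst prod_uminus) simp
    also have "(\<Prod>i<n. (-1 + t + of_nat i)) = (\<Prod>i<n. of_nat i + (t - 1))"
      by (rule prod.cong) auto
    finally show ?thesis
      by (simp add: cp_def poly_pcompose poly_bp gbinomial_prod_rev RP_def poly_prod)
  qed
  then show ?thesis by (simp add: poly_eq_poly_eq_iff[symmetric] fun_eq_iff)
qed

lemma dcp_stir: "poly (pderiv (cp n)) t = (-1)^n / fact n * stirling1_poly n 1 (t - 1)"
  unfolding cp_RP stir by (simp add: pderiv_smult pderiv_pcompose poly_pcompose pderiv_pCons)


theorem proposition5p4:
  fixes m n :: nat
  assumes "m \<ge> 1" and "n \<ge> 1"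
  shows "G1 m n = (-1) ^ n / fact n *
           integral {0..1} (\<lambda>t::real. (t gchoose m) * stirling1_poly n 1 (t - 1))"
proof -
  have "G1 m n = H m n" using assms by (simp add: G1_def G1_series_eq Fs_def ff_def)
  also have "poly (bp m * pderiv (cp n)) =
      (\<lambda>t. ((-1) ^ n / fact n) *\<^sub>R ((t gchoose m) * stirling1_poly n 1 (t - 1)))"
    by (simp add: fun_eq_iff poly_bp dcp_stir)
  hence "H m n = integral {0..1} (\<lambda>t. ((-1) ^ n / fact n) *\<^sub>R ((t gchoose m) * stirling1_poly n 1 (t - 1)))"
    by (simp add: H_def Intg_def)
  also have "\<dots> = (-1) ^ n / fact n * integral {0..1} (\<lambda>t::real. (t gchoose m) * stirling1_poly n 1 (t - 1))"
    by (subst integral_cmul) simp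
  finally show ?thesis .
qed

end
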